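(* Let $a=(a_1,\dots,a_m)$ be a composition with $a_m=2$, and let $a'=(a_1,\dots,a_{m-1},1,1)$. Then for every $n\ge 0$, the number of compositions of size $n$ that dominate $a$ equals the number of compositions of size $n$ that dominate $a'$.
   Context: A composition is a finite sequence of positive integers; its size is the sum of its components. A composition $b=(b_1,\dots,b_k)$ dominates $a=(a_1,\dots,a_m)$ if there are indices $1\le i(1)<i(2)<\dots<i(m)\le k$ with $a_j\le b_{i(j)}$ for every $j\in[m]$. *)

theory Defs
  imports Main
begin

definition composition :: "nat list \<Rightarrow> bool" where
  "composition c \<longleftrightarrow> (\<forall>x\<in>set c. 0 < x)"

definition dominates :: "nat list \<Rightarrow> nat list \<Rightarrow> bool" where
  "dominates b a \<longleftrightarrow>
     (\<exists>i :: nat \<Rightarrow> nat. strict_mono_on {..<length a} i \<and>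
        (\<forall>j<length a. i j < length b \<and> a ! j \<le> b ! i j))"

definition dominating_compositions :: "nat list \<Rightarrow> nat \<Rightarrow> nat list set" where
  "dominating_compositions a n = {b. composition b \<and> sum_list b = n \<and> dominates b a}"

end

theory Submission
  imports Defs
begin

fun dm :: "nat list \<Rightarrow> nat list \<Rightarrow> bool" where
  "dm b [] = True"
| "dm [] (x#xs) = False"
| "dm (y#ys) (x#xs) = ((x \<le> y \<and> dm ys xs) \<or> dm ys (x#xs))"

lemma dom_nil: "dominates b []"
  unfolding dominates_def by (auto simp: strict_mono_on_def)

lemma dom_nil2: "\<not> dominates [] (x#xs)"
  unfolding dominates_def by auto

lemma dom_cons1:
  assumes "x \<le> y" "dominates ys xs" shows "dominates (y#ys) (x#xs)"
proof -
  from assms(2) obtain i where i: "strict_mono_on {..<length xs} i"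
    "\<forall>j<length xs. i j < length ys \<and> xs ! j \<le> ys ! i j"
    unfolding dominates_def by blast
  define i' where "i' j = (if j = 0 then 0 else Suc (i (j-1)))" for j
  have "strict_mono_on {..<length (x#xs)} i'"
    unfolding strict_mono_on_def i'_def
  proof (intro allI impI)
    fix r s assume rs: "r \<in> {..<length (x#xs)} \<and> s \<in> {..<length (x#xs)} \<and> r < s"
    show "(if r = 0 then 0 else Suc (i (r-1))) < (if s = 0 then 0 else Suc (i (s-1)))"
    proof (cases "r = 0")
      case False
      have "r-1 < length xs" "s-1 < length xs" "r-1 < s-1" using rs False by auto
      then have "i (r-1) < i (s-1)" using i(1) unfolding strict_mono_on_def by blast
      then show ?thesis using False rs by auto
    qed (use rs in auto)
  qed
  moreover have "\<forall>j<length (x#xs). i' j < length (y#ys) \<and> (x#xs) ! j \<le> (y#ys) ! i' j"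
  proof (intro allI impI)
    fix j assume "j < length (x#xs)"
    then show "i' j < length (y#ys) \<and> (x#xs) ! j \<le> (y#ys) ! i' j"
      using i(2) assms(1) unfolding i'_def
      by (cases j) auto
  qed
  ultimately show ?thesis unfolding dominates_def by blast
qed

lemma dom_cons2:
  assumes "dominates ys xs" shows "dominates (y#ys) xs"
proof -
  from assms obtain i where i: "strict_mono_on {..<length xs} i"
    "\<forall>j<length xs. i j < length ys \<and> xs ! j \<le> ys ! i j"
    unfolding dominates_def by blast
  define i' where "i' j = Suc (i j)" for j
  have "strict_mono_on {..<length xs} i'"
    using i(1) unfolding strict_mono_on_def i'_def by auto
  moreover have "\<forall>j<length xs. i' j < length (y#ys) \<and> xs ! j \<le> (y#ys) ! i' j"
    using i(2) unfolding i'_def by auto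
  ultimately show ?thesis unfolding dominates_def by blast
qed

lemma dom_cons_inv:
  assumes "dominates (y#ys) (x#xs)"
  shows "(x \<le> y \<and> dominates ys xs) \<or> dominates ys (x#xs)"
proof -
  from assms obtain i where i: "strict_mono_on {..<length (x#xs)} i"
    "\<forall>j<length (x#xs). i j < length (y#ys) \<and> (x#xs) ! j \<le> (y#ys) ! i j"
    unfolding dominates_def by blast
  have mono: "\<And>j k. j < k \<Longrightarrow> k < Suc (length xs) \<Longrightarrow> i j < i k"
    using i(1) unfolding strict_mono_on_def by auto
  show ?thesis
  proof (cases "i 0 = 0")
    case True
    have "x \<le> y" using i(2) True by force
    define i' where "i' j = i (Suc j) - 1" for j
    have pos: "\<And>j. j < length xs \<Longrightarrow> 0 < i (Suc j)"
      using mono[of 0] True by fastforce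
    have "strict_mono_on {..<length xs} i'"
      unfolding strict_mono_on_def i'_def
    proof (intro allI impI)
      fix r s assume "r \<in> {..<length xs} \<and> s \<in> {..<length xs} \<and> r < s"
      then show "i (Suc r) - 1 < i (Suc s) - 1" using mono[of "Suc r" "Suc s"] pos[of r] by auto
    qed
    moreover have "\<forall>j<length xs. i' j < length ys \<and> xs ! j \<le> ys ! i' j"
    proof (intro allI impI)
      fix j assume j: "j < length xs"
      have "i (Suc j) < length (y#ys) \<and> (x#xs) ! Suc j \<le> (y#ys) ! i (Suc j)"
        using i(2) j by auto
      moreover obtain k where "i (Suc j) = Suc k" using pos[OF j] gr0_implies_Suc by blast
      ultimately show "i' j < length ys \<and> xs ! j \<le> ys ! i' j" unfolding i'_def by auto
    qed
    ultimately show ?thesis using \<open>x \<le> y\<close> unfolding dominates_def by blast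
  next
    case False
    define i' where "i' j = i j - 1" for j
    have pos: "\<And>j. j < Suc (length xs) \<Longrightarrow> 0 < i j"
    proof -
      fix j assume "j < Suc (length xs)"
      then show "0 < i j" using False mono[of 0 j] by (cases j) auto
    qed
    have "strict_mono_on {..<length (x#xs)} i'"
      unfolding strict_mono_on_def i'_def
    proof (intro allI impI)
      fix r s assume "r \<in> {..<length (x#xs)} \<and> s \<in> {..<length (x#xs)} \<and> r < s"
      then show "i r - 1 < i s - 1" using mono[of r s] pos[of r] by auto
    qed
    moreover have "\<forall>j<length (x#xs). i' j < length ys \<and> (x#xs) ! j \<le> ys ! i' j"
    proof (intro allI impI)
      fix j assume j: "j < length (x#xs)"
      have "i j < length (y#ys) \<and> (x#xs) ! j \<le> (y#ys) ! i j"
        using i(2) j by auto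
      moreover obtain k where "i j = Suc k" using pos j gr0_implies_Suc by (metis length_Cons)
      ultimately show "i' j < length ys \<and> (x#xs) ! j \<le> ys ! i' j" unfolding i'_def by auto
    qed
    ultimately show ?thesis unfolding dominates_def by blast
  qed
qed

lemma dominates_dm: "dominates b a = dm b a"
proof (induction b arbitrary: a)
  case Nil
  then show ?case by (cases a) (auto simp: dom_nil dom_nil2)
next
  case (Cons y ys)
  then show ?case
    by (cases a) (auto simp: dom_nil dest: dom_cons_inv intro: dom_cons1 dom_cons2)
qed

lemma dm_weaken: "dm ys a \<Longrightarrow> dm (y#ys) a"
  by (cases a) auto

lemma dm_tail: "dm ys (x#xs) \<Longrightarrow> dm ys xs"
  by (induction ys) (auto intro: dm_weaken)

lemma dm_greedy: "x \<le> y \<Longrightarrow> dm (y#ys) (x#xs) = dm ys xs"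
  using dm_tail by auto

definition sw :: "nat list \<Rightarrow> nat list" where
  "sw b = (if b = replicate (sum_list b) 1 \<and> 2 \<le> sum_list b then [sum_list b]
           else if b = [sum_list b] \<and> 2 \<le> sum_list b then replicate (sum_list b) 1 else b)"

fun F :: "nat list \<Rightarrow> nat list \<Rightarrow> nat list" where
  "F [] b = sw b"
| "F (x#p) [] = []"
| "F (x#p) (y#b) = (if x \<le> y then y # F p b else y # F (x#p) b)"

lemma sw_sum: "sum_list (sw b) = sum_list b"
  unfolding sw_def by (auto simp: sum_list_replicate)

lemma sw_comp: "composition b \<Longrightarrow> composition (sw b)"
  unfolding sw_def composition_def by auto

lemma sw_inv: "sw (sw b) = sw b \<Longrightarrow> True" by simp

lemma sw_sw: "sw (sw b) = b"
proof -
  consider (a) "b = replicate (sum_list b) 1 \<and> 2 \<le> sum_list b"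
    | (b) "\<not>(b = replicate (sum_list b) 1 \<and> 2 \<le> sum_list b)" "b = [sum_list b] \<and> 2 \<le> sum_list b"
    | (c) "\<not>(b = replicate (sum_list b) 1 \<and> 2 \<le> sum_list b)" "\<not>(b = [sum_list b] \<and> 2 \<le> sum_list b)"
    by blast
  then show ?thesis
  proof cases
    case a
    then have "sw b = [sum_list b]" unfolding sw_def by simp
    moreover have "[sum_list b] \<noteq> replicate (sum_list b) 1" using a
      by (metis One_nat_def Suc_1 Suc_n_not_le_n length_Cons length_replicate list.size(3) one_le_numeral)
    ultimately show ?thesis using a unfolding sw_def by auto
  next
    case b
    then have "sw b = replicate (sum_list b) 1" unfolding sw_def by simp
    then show ?thesis using b unfolding sw_def by (auto simp: sum_list_replicate)
  next
    case c
    then have "sw b = b" unfolding sw_def by metis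
    then show ?thesis by simp
  qed
qed

lemma F_sum: "sum_list (F p b) = sum_list b"
  by (induction p b rule: F.induct) (auto simp: sw_sum)

lemma F_comp: "composition b \<Longrightarrow> composition (F p b)"
proof (induction p b rule: F.induct)
  case (1 b) then show ?case by (simp add: sw_comp)
next
  case (2 x p) then show ?case by simp
next
  case (3 x p y b) then show ?case by (auto simp: composition_def)
qed

lemma F_F: "F p (F p b) = b"
  by (induction p b rule: F.induct) (auto simp: sw_sw)

lemma dm_2: "dm b [2] = (\<exists>y\<in>set b. 2 \<le> y)"
  by (induction b) auto

lemma dm_1: "composition c \<Longrightarrow> dm c [1] = (c \<noteq> [])"
  by (induction c) (auto simp: composition_def)

lemma dm_11: "composition c \<Longrightarrow> dm c [1,1] = (2 \<le> length c)"
proof (induction c)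
  case Nil then show ?case by simp
next
  case (Cons y ys)
  then have "composition ys" "0 < y" by (auto simp: composition_def)
  then show ?case using Cons dm_1[of ys] by (cases ys) auto
qed

lemma all_ones: "composition b \<Longrightarrow> \<forall>y\<in>set b. y \<le> 1 \<Longrightarrow> b = replicate (sum_list b) 1"
proof (induction b)
  case Nil then show ?case by simp
next
  case (Cons y ys)
  then have "y = 1" "composition ys" by (auto simp: composition_def)
  then show ?case using Cons by auto
qed

lemma sw_key: "composition b \<Longrightarrow> (\<exists>y\<in>set b. 2 \<le> y) = (2 \<le> length (sw b))"
proof -
  assume cb: "composition b"
  consider (a) "b = replicate (sum_list b) 1 \<and> 2 \<le> sum_list b"
    | (b) "\<not>(b = replicate (sum_list b) 1 \<and> 2 \<le> sum_list b)" "b = [sum_list b] \<and> 2 \<le> sum_list b"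
    | (c) "\<not>(b = replicate (sum_list b) 1 \<and> 2 \<le> sum_list b)" "\<not>(b = [sum_list b] \<and> 2 \<le> sum_list b)"
    by blast
  then show ?thesis
  proof cases
    case a
    then have "sw b = [sum_list b]" unfolding sw_def by simp
    moreover have "\<not>(\<exists>y\<in>set b. 2 \<le> y)" using a
      by (metis in_set_replicate numeral_le_one_iff semiring_norm(69))
    ultimately show ?thesis by simp
  next
    case b
    then have "sw b = replicate (sum_list b) 1" unfolding sw_def by simp
    then show ?thesis using b by (metis length_replicate list.set_intros(1))
  next
    case c
    then have s: "sw b = b" unfolding sw_def by metis
    show ?thesis
    proof
      assume "\<exists>y\<in>set b. 2 \<le> y"
      then obtain y where y: "y \<in> set b" "2 \<le> y" by blast
      show "2 \<le> length (sw b)"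
      proof (rule ccontr)
        assume "\<not> 2 \<le> length (sw b)"
        then have "length b \<le> 1" using s by simp
        with y have "b = [y]" by (cases b) auto
        with c y show False by simp
      qed
    next
      assume l: "2 \<le> length (sw b)"
      show "\<exists>y\<in>set b. 2 \<le> y"
      proof (rule ccontr)
        assume "\<not> (\<exists>y\<in>set b. 2 \<le> y)"
        then have "\<forall>y\<in>set b. y \<le> 1" by auto
        then have r: "b = replicate (sum_list b) 1" using all_ones cb by blast
        then have "length b = sum_list b" by (metis length_replicate)
        with l s r c show False by simp
      qed
    qed
  qed
qed

lemma F_key: "composition b \<Longrightarrow> dm b (p @ [2]) = dm (F p b) (p @ [1,1])"
proof (induction p b rule: F.induct)
  case (1 b)
  then show ?case using dm_2 dm_11[OF sw_comp[OF 1]] sw_key[OF 1] by simp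
next
  case (2 x p)
  then show ?case by simp
next
  case (3 x p y b)
  then have cb: "composition b" by (simp add: composition_def)
  show ?case
  proof (cases "x \<le> y")
    case True
    have e1: "dm (y#b) ((x#p) @ [2]) = dm b (p @ [2])" using dm_greedy[OF True] by simp
    have e2: "dm (y#F p b) ((x#p) @ [1,1]) = dm (F p b) (p @ [1,1])" using dm_greedy[OF True] by simp
    show ?thesis using 3(1)[OF True cb] True e1 e2 by simp
  next
    case False
    then show ?thesis using 3(2)[OF False cb] by simp
  qed
qed

theorem lemma2p4:
  fixes a :: "nat list" and n :: nat
  assumes "composition a" and "a \<noteq> []" and "last a = 2"
  shows "card (dominating_compositions a n) =
         card (dominating_compositions (butlast a @ [1, 1]) n)"
proof -
  define p where "p = butlast a"
  have a: "a = p @ [2]" using assms(2,3) unfolding p_def by (metis append_butlast_last_id)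
  have "bij_betw (F p) (dominating_compositions a n) (dominating_compositions (p @ [1,1]) n)"
  proof (rule bij_betw_byWitness[where f' = "F p"])
    show "\<forall>x\<in>dominating_compositions a n. F p (F p x) = x" by (simp add: F_F)
    show "\<forall>x\<in>dominating_compositions (p @ [1,1]) n. F p (F p x) = x" by (simp add: F_F)
    show "F p ` dominating_compositions a n \<subseteq> dominating_compositions (p @ [1,1]) n"
      unfolding dominating_compositions_def a
      by (auto simp: F_comp F_sum dominates_dm F_key)
    show "F p ` dominating_compositions (p @ [1,1]) n \<subseteq> dominating_compositions a n"
    proof
      fix c assume "c \<in> F p ` dominating_compositions (p @ [1,1]) n"
      then obtain b where b: "b \<in> dominating_compositions (p @ [1,1]) n" "c = F p b" by blast
      have cc: "composition c" using b F_comp unfolding dominating_compositions_def by auto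
      have "dm (F p c) (p @ [1,1])" using b F_F unfolding dominating_compositions_def
        by (simp add: dominates_dm)
      then have "dm c (p @ [2])" using F_key[OF cc] by simp
      then show "c \<in> dominating_compositions a n"
        using b cc F_sum unfolding dominating_compositions_def a by (simp add: dominates_dm)
    qed
  qed
  then show ?thesis unfolding p_def by (metis bij_betw_same_card p_def)
qed

end
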